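(* Let $f:[0,\infty)\to\mathbb{R}$ be convex with $f(1)=0$ and let $G$ be increasing and convex with $G(0)=0$. Let $\mathcal{M}$ be a finite set with $|\mathcal{M}|\ge2$, and let $p_{M\hat M}$ be a joint distribution on $\mathcal{M}\times\mathcal{M}$ whose $M$-marginal is uniform and with $p_{M\hat M}(M\ne\hat M)=\epsilon$. Then under $p_{M\hat M}$, $$I_{G,f}(M;\hat M)\ge G\!\left(\frac{1}{|\mathcal{M}|}f\big(|\mathcal{M}|(1-\epsilon)\big)+\frac{|\mathcal{M}|-1}{|\mathcal{M}|}f\!\left(\frac{|\mathcal{M}|\epsilon}{|\mathcal{M}|-1}\right)\right).$$
   Context: $D_f(p\|q)=\sum_y q(y) f(p(y)/q(y))$ with $0f(0/0)=0$. $I_{G,f}(M;\hat M)=\min_{q_{\hat M}}\sum_m p_M(m)\,G(D_f(p_{\hat M|M=m}\|q_{\hat M}))$. *)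

theory Defs
  imports "HOL-Analysis.Analysis"
begin

text \<open>Asymptotic slope of f, used for the convention q f(p/q) = p * lim_{t->oo} f(t)/t when q = 0 < p.\<close>
definition f_slope_inf :: "(real \<Rightarrow> real) \<Rightarrow> ereal" where
  "f_slope_inf f = Lim at_top (\<lambda>t. ereal (f t / t))"

definition fdiv_term :: "(real \<Rightarrow> real) \<Rightarrow> real \<Rightarrow> real \<Rightarrow> ereal" where
  "fdiv_term f a b =
     (if b > 0 then ereal (b * f (a / b))
      else if a = 0 then 0
      else ereal a * f_slope_inf f)"

definition f_div :: "(real \<Rightarrow> real) \<Rightarrow> ('a::finite \<Rightarrow> real) \<Rightarrow> ('a \<Rightarrow> real) \<Rightarrow> ereal" where
  "f_div f p q = (\<Sum>y\<in>UNIV. fdiv_term f (p y) (q y))"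

text \<open>G extended to [0,oo] by its supremum (limit at oo, G being increasing).\<close>
definition G_ext :: "(real \<Rightarrow> real) \<Rightarrow> ereal \<Rightarrow> ereal" where
  "G_ext G x = (if x = \<infinity> then (SUP r\<in>{0..}. ereal (G r)) else ereal (G (real_of_ereal x)))"

definition prob_dists :: "('a::finite \<Rightarrow> real) set" where
  "prob_dists = {q. (\<forall>y. 0 \<le> q y) \<and> (\<Sum>y\<in>UNIV. q y) = 1}"

text \<open>Joint distribution p m mh = p_{M Mhat}(m, mh); marginal and conditional.\<close>
definition marg1 :: "('a::finite \<Rightarrow> 'b::finite \<Rightarrow> real) \<Rightarrow> 'a \<Rightarrow> real" where
  "marg1 p m = (\<Sum>y\<in>UNIV. p m y)"

definition cond_dist :: "('a::finite \<Rightarrow> 'b::finite \<Rightarrow> real) \<Rightarrow> 'a \<Rightarrow> 'b \<Rightarrow> real" where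
  "cond_dist p m y = p m y / marg1 p m"

definition I_Gf :: "(real \<Rightarrow> real) \<Rightarrow> (real \<Rightarrow> real) \<Rightarrow> ('a::finite \<Rightarrow> 'b::finite \<Rightarrow> real) \<Rightarrow> ereal" where
  "I_Gf G f p = (INF q\<in>prob_dists. \<Sum>m\<in>UNIV. ereal (marg1 p m) * G_ext G (f_div f (cond_dist p m) q))"

end

theory Submission
  imports Defs
begin

lemma chord0_mono:
  fixes f :: "real \<Rightarrow> real"
  assumes cf: "convex_on {0..} f" and a: "0 < a" and ab: "a \<le> b"
  shows "(f a - f 0) / a \<le> (f b - f 0) / b"
proof -
  have b: "0 < b" using a ab by linarith
  have "f ((1 - a/b) *\<^sub>R 0 + (a/b) *\<^sub>R b) \<le> (1 - a/b) * f 0 + (a/b) * f b"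
    by (rule convex_onD[OF cf]) (use a b ab in auto)
  hence "f a \<le> (1 - a/b) * f 0 + (a/b) * f b" using b by simp
  moreover have "(1 - a/b) * f 0 = f 0 - (a/b) * f 0" by (simp add: left_diff_distrib)
  moreover have "a/b * (f b - f 0) = a/b * f b - a/b * f 0" by (simp add: right_diff_distrib)
  ultimately have "f a - f 0 \<le> a/b * (f b - f 0)" by linarith
  hence "f a - f 0 \<le> a * ((f b - f 0)/b)" by simp
  thus ?thesis using a by (metis mult.commute pos_divide_le_eq)
qed

lemma chord_far:
  fixes f :: "real \<Rightarrow> real"
  assumes cf: "convex_on {0..} f" and x: "0 \<le> x" and d: "0 < d" and t: "x + d \<le> t"
  shows "f x + (f (x+d) - f x) / d * (t - x) \<le> f t"
proof -
  define l where "l = d / (t - x)"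
  have tx: "t - x > 0" using d t by linarith
  have l01: "0 \<le> l" "l \<le> 1" using d t tx by (auto simp: l_def field_simps)
  have "f ((1 - l) *\<^sub>R x + l *\<^sub>R t) \<le> (1 - l) * f x + l * f t"
    by (rule convex_onD[OF cf]) (use l01 x t d in auto)
  moreover have "(1 - l) *\<^sub>R x + l *\<^sub>R t = x + d"
  proof -
    have "(1 - l) *\<^sub>R x + l *\<^sub>R t = x + l * (t - x)" by (simp add: algebra_simps)
    moreover have "l * (t - x) = d" using tx by (simp add: l_def)
    ultimately show ?thesis by simp
  qed
  ultimately have "f (x+d) \<le> (1 - l) * f x + l * f t" by simp
  moreover have "(1 - l) * f x = f x - l * f x" by (simp add: left_diff_distrib)
  moreover have "l * (f t - f x) = l * f t - l * f x" by (simp add: right_diff_distrib)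
  ultimately have "f (x+d) - f x \<le> l * (f t - f x)" by linarith
  also have "l * (f t - f x) = d * (f t - f x) / (t - x)" by (simp add: l_def)
  finally have "(f (x+d) - f x) * (t - x) \<le> d * (f t - f x)" using tx by (simp add: pos_le_divide_eq)
  hence "(f (x+d) - f x) * (t - x) / d \<le> f t - f x" using d by (simp add: pos_divide_le_eq mult.commute)
  hence "(f (x+d) - f x) / d * (t - x) \<le> f t - f x" by simp
  thus ?thesis by simp
qed

definition Sl :: "(real \<Rightarrow> real) \<Rightarrow> ereal" where
  "Sl f = (SUP t\<in>{0<..}. ereal ((f t - f 0) / t))"

lemma slope_eq:
  fixes f :: "real \<Rightarrow> real"
  assumes cf: "convex_on {0..} f"
  shows "f_slope_inf f = Sl f"
proof -
  have h: "((\<lambda>t. ereal ((f t - f 0) / t)) \<longlongrightarrow> Sl f) at_top"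
  proof (rule order_tendstoI)
    fix a assume "a < Sl f"
    then obtain t0 where t0: "t0 > 0" "a < ereal ((f t0 - f 0) / t0)"
      unfolding Sl_def less_SUP_iff by auto
    show "\<forall>\<^sub>F t in at_top. a < ereal ((f t - f 0) / t)"
      using eventually_ge_at_top[of t0]
    proof eventually_elim
      case (elim t)
      have "(f t0 - f 0) / t0 \<le> (f t - f 0) / t" by (rule chord0_mono[OF cf t0(1) elim])
      thus ?case using t0(2) by (meson ereal_less_le ereal_less_eq(3) order_less_le_trans)
    qed
  next
    fix a assume a: "Sl f < a"
    show "\<forall>\<^sub>F t in at_top. ereal ((f t - f 0) / t) < a"
      using eventually_gt_at_top[of 0]
    proof eventually_elim
      case (elim t)
      have "ereal ((f t - f 0) / t) \<le> Sl f" unfolding Sl_def using elim by (auto intro: SUP_upper)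
      thus ?case using a by simp
    qed
  qed
  have z: "((\<lambda>t. ereal (f 0 / t)) \<longlongrightarrow> ereal 0) at_top"
    by (rule tendsto_ereal[OF tendsto_divide_0[OF tendsto_const filterlim_mono[OF filterlim_ident at_top_le_at_infinity order_refl]]])
  have "((\<lambda>t. ereal ((f t - f 0) / t) + ereal (f 0 / t)) \<longlongrightarrow> Sl f + ereal 0) at_top"
    by (rule tendsto_add_ereal_general1[OF _ h z]) simp
  hence "((\<lambda>t. ereal ((f t - f 0) / t) + ereal (f 0 / t)) \<longlongrightarrow> Sl f) at_top" by simp
  moreover have "\<forall>\<^sub>F t in at_top. ereal ((f t - f 0) / t) + ereal (f 0 / t) = ereal (f t / t)"
    using eventually_gt_at_top[of 0] by eventually_elim (simp add: diff_divide_distrib)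
  ultimately have "((\<lambda>t. ereal (f t / t)) \<longlongrightarrow> Sl f) at_top"
    by (rule Lim_transform_eventually)
  thus ?thesis unfolding f_slope_inf_def by (intro tendsto_Lim) auto
qed

lemma Sl_gt: "Sl f > -\<infinity>"
proof -
  have "ereal ((f 1 - f 0) / 1) \<le> Sl f" unfolding Sl_def by (rule SUP_upper) auto
  thus ?thesis by (cases "Sl f") auto
qed

lemma Sl_ge:
  fixes f :: "real \<Rightarrow> real"
  assumes cf: "convex_on {0..} f" and x: "0 \<le> x" and d: "0 < d"
  shows "ereal ((f (x+d) - f x) / d) \<le> Sl f"
proof -
  obtain c where c_def: "c = (f (x+d) - f x) / d" by blast
  have "ereal c \<le> Sl f"
  proof (rule ccontr)
  assume "\<not> ereal c \<le> Sl f"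
  hence lt: "Sl f < ereal c" by simp
  then obtain s where s: "Sl f = ereal s" using Sl_gt[of f] by (cases "Sl f") auto
  have sc: "s < c" using lt s by simp
  have bound: "f t \<le> f 0 + s * t" if "t > 0" for t
  proof -
    have "ereal ((f t - f 0) / t) \<le> Sl f" unfolding Sl_def using that by (auto intro: SUP_upper)
    hence "(f t - f 0) / t \<le> s" using s by simp
    thus ?thesis using that by (simp add: pos_divide_le_eq)
  qed
  obtain t where t1: "x + d \<le> t" and t2: "(f 0 - f x + c * x) / (c - s) + 1 \<le> t"
    by (meson max.cobounded1 max.cobounded2)
  have tpos: "t > 0" using t1 x d by linarith
  have A: "f x + c * (t - x) \<le> f t" using chord_far[OF cf x d t1] by (simp add: c_def)
  have B: "f t \<le> f 0 + s * t" using bound tpos by simp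
  have A': "f x + (c * t - c * x) \<le> f t" using A by (simp add: right_diff_distrib)
  have "c * t - s * t \<le> f 0 - f x + c * x" using A' B by linarith
  hence "(c - s) * t \<le> f 0 - f x + c * x" by (simp add: left_diff_distrib)
  hence "t \<le> (f 0 - f x + c * x) / (c - s)" using sc by (simp add: pos_le_divide_eq mult.commute)
  thus False using t2 by linarith
  qed
  thus ?thesis by (simp add: c_def)
qed

lemma fdiv_zero: "0 \<le> a \<Longrightarrow> fdiv_term f a 0 = ereal a * f_slope_inf f"
  by (auto simp: fdiv_term_def)

lemma fdiv_pos: "b > 0 \<Longrightarrow> fdiv_term f a b = ereal (b * f (a / b))"
  by (simp add: fdiv_term_def)

lemma merge2_aux:
  fixes f :: "real \<Rightarrow> real"
  assumes cf: "convex_on {0..} f" and a1: "0 \<le> a1" and a2: "0 \<le> a2"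
    and b1: "0 < b1" and b2: "0 \<le> b2"
  shows "fdiv_term f (a1 + a2) (b1 + b2) \<le> fdiv_term f a1 b1 + fdiv_term f a2 b2"
proof (cases "b2 > 0")
  case True
  define l where "l = b2 / (b1 + b2)"
  have l01: "0 \<le> l" "l \<le> 1" using b1 True by (auto simp: l_def)
  have "f ((1 - l) *\<^sub>R (a1/b1) + l *\<^sub>R (a2/b2)) \<le> (1 - l) * f (a1/b1) + l * f (a2/b2)"
    by (rule convex_onD[OF cf]) (use l01 a1 a2 b1 True in auto)
  moreover have oml: "1 - l = b1 / (b1 + b2)" using b1 True by (simp add: l_def field_simps)
  moreover have "(1 - l) *\<^sub>R (a1/b1) + l *\<^sub>R (a2/b2) = (a1 + a2) / (b1 + b2)"
  proof -
    have "(1 - l) *\<^sub>R (a1/b1) + l *\<^sub>R (a2/b2) = b1/(b1+b2)*(a1/b1) + b2/(b1+b2)*(a2/b2)"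
      using oml by (simp add: l_def)
    also have "\<dots> = a1/(b1+b2) + a2/(b1+b2)" using b1 True by simp
    also have "\<dots> = (a1+a2)/(b1+b2)" by (simp add: add_divide_distrib)
    finally show ?thesis .
  qed
  ultimately have "f ((a1 + a2) / (b1 + b2)) \<le> b1 / (b1 + b2) * f (a1/b1) + b2 / (b1 + b2) * f (a2/b2)"
    by (simp add: l_def)
  hence "(b1 + b2) * f ((a1 + a2) / (b1 + b2)) \<le> (b1 + b2) * (b1 / (b1 + b2) * f (a1/b1) + b2 / (b1 + b2) * f (a2/b2))"
    using b1 True by (intro mult_left_mono) auto
  also have "\<dots> = b1 * f (a1/b1) + b2 * f (a2/b2)"
  proof -
    have ne: "b1 + b2 \<noteq> 0" using b1 True by simp
    show ?thesis by (simp add: distrib_left ne)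
  qed
  finally show ?thesis using b1 True by (simp add: fdiv_pos)
next
  case False
  hence b20: "b2 = 0" using b2 by simp
  show ?thesis
  proof (cases "a2 = 0")
    case True thus ?thesis using b20 b1 by (simp add: fdiv_term_def)
  next
    case a2n: False
    hence a2p: "a2 > 0" using a2 by simp
    show ?thesis
    proof (cases "Sl f")
      case PInf
      hence "fdiv_term f a2 b2 = \<infinity>" using b20 a2p slope_eq[OF cf] by (simp add: fdiv_term_def)
      thus ?thesis by simp
    next
      case MInf thus ?thesis using Sl_gt[of f] by simp
    next
      case (real s)
      have "ereal ((f (a1/b1 + a2/b1) - f (a1/b1)) / (a2/b1)) \<le> Sl f"
        by (rule Sl_ge[OF cf]) (use a1 b1 a2p in auto)
      hence "(f (a1/b1 + a2/b1) - f (a1/b1)) / (a2/b1) \<le> s" using real by simp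
      hence "f (a1/b1 + a2/b1) - f (a1/b1) \<le> s * (a2/b1)" using a2p b1 by (simp add: pos_divide_le_eq pos_le_divide_eq)
      hence "b1 * (f (a1/b1 + a2/b1) - f (a1/b1)) \<le> b1 * (s * (a2/b1))" using b1 by (intro mult_left_mono) auto
      hence "b1 * f (a1/b1 + a2/b1) \<le> b1 * f (a1/b1) + a2 * s" using b1 by (simp add: right_diff_distrib mult.commute)
      moreover have "a1/b1 + a2/b1 = (a1 + a2) / b1" by (simp add: add_divide_distrib)
      ultimately have "b1 * f ((a1 + a2) / b1) \<le> b1 * f (a1/b1) + a2 * s" by simp
      moreover have "fdiv_term f a2 b2 = ereal (a2 * s)" using b20 a2p real slope_eq[OF cf] by (simp add: fdiv_term_def)
      ultimately show ?thesis using b1 b20 by (simp add: fdiv_pos)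
    qed
  qed
qed

lemma merge2:
  fixes f :: "real \<Rightarrow> real"
  assumes cf: "convex_on {0..} f" and a1: "0 \<le> a1" and a2: "0 \<le> a2"
    and b1: "0 \<le> b1" and b2: "0 \<le> b2"
  shows "fdiv_term f (a1 + a2) (b1 + b2) \<le> fdiv_term f a1 b1 + fdiv_term f a2 b2"
proof -
  consider "b1 > 0" | "b2 > 0" | "b1 = 0 \<and> b2 = 0" using b1 b2 by linarith
  thus ?thesis
  proof cases
    case 1 thus ?thesis using merge2_aux[OF cf a1 a2 _ b2] by simp
  next
    case 2 thus ?thesis using merge2_aux[OF cf a2 a1 2 b1] by (simp add: add.commute)
  next
    case 3
    have "fdiv_term f (a1 + a2) (b1 + b2) = ereal (a1 + a2) * f_slope_inf f"
      using 3 a1 a2 by (simp add: fdiv_zero)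
    also have "\<dots> = ereal a1 * f_slope_inf f + ereal a2 * f_slope_inf f"
      using a1 a2 by (simp add: ereal_left_distrib flip: plus_ereal.simps)
    also have "\<dots> = fdiv_term f a1 b1 + fdiv_term f a2 b2" using 3 a1 a2 by (simp add: fdiv_zero)
    finally show ?thesis by simp
  qed
qed

lemma merge:
  fixes f :: "real \<Rightarrow> real" and a b :: "'i \<Rightarrow> real"
  assumes cf: "convex_on {0..} f" and fin: "finite I"
    and a: "\<And>i. i \<in> I \<Longrightarrow> 0 \<le> a i" and b: "\<And>i. i \<in> I \<Longrightarrow> 0 \<le> b i"
  shows "fdiv_term f (\<Sum>i\<in>I. a i) (\<Sum>i\<in>I. b i) \<le> (\<Sum>i\<in>I. fdiv_term f (a i) (b i))"
  using fin a b
proof (induction I rule: finite_induct)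
  case empty thus ?case by (simp add: fdiv_term_def)
next
  case (insert j I)
  have "fdiv_term f (\<Sum>i\<in>insert j I. a i) (\<Sum>i\<in>insert j I. b i)
      = fdiv_term f (a j + (\<Sum>i\<in>I. a i)) (b j + (\<Sum>i\<in>I. b i))" using insert by simp
  also have "\<dots> \<le> fdiv_term f (a j) (b j) + fdiv_term f (\<Sum>i\<in>I. a i) (\<Sum>i\<in>I. b i)"
    by (rule merge2[OF cf]) (use insert in \<open>auto intro: sum_nonneg\<close>)
  also have "\<dots> \<le> fdiv_term f (a j) (b j) + (\<Sum>i\<in>I. fdiv_term f (a i) (b i))"
    using insert by (intro add_left_mono) auto
  also have "\<dots> = (\<Sum>i\<in>insert j I. fdiv_term f (a i) (b i))" using insert by simp
  finally show ?case .
qed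

lemma fdiv_scale:
  assumes c: "c > 0" and b: "0 \<le> b" and a: "0 \<le> a"
  shows "fdiv_term f (c * a) (c * b) = ereal c * fdiv_term f a b"
proof (cases "b > 0")
  case True thus ?thesis using c by (simp add: fdiv_pos)
next
  case False
  hence "b = 0" using b by simp
  hence "fdiv_term f (c * a) (c * b) = ereal (c * a) * f_slope_inf f" "fdiv_term f a b = ereal a * f_slope_inf f"
    using c a by (simp_all add: fdiv_zero)
  thus ?thesis by (metis mult.assoc times_ereal.simps(1))
qed

lemma ereal_cmult_add: "c > 0 \<Longrightarrow> ereal c * (x + y) = ereal c * x + ereal c * y"
  by (cases x y rule: ereal2_cases) (simp_all add: distrib_left)

lemma ereal_cmult_sum: "c > 0 \<Longrightarrow> ereal c * (\<Sum>i\<in>I. g i) = (\<Sum>i\<in>I. ereal c * g i)"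
  by (induction I rule: infinite_finite_induct) (simp_all add: ereal_cmult_add)

theorem lemma4:
  fixes f G :: "real \<Rightarrow> real" and p :: "'m::finite \<Rightarrow> 'm \<Rightarrow> real" and \<epsilon> :: real
  assumes f_convex: "convex_on {0..} f" and f1: "f 1 = 0"
    and G_mono: "mono_on {0..} G" and G_convex: "convex_on {0..} G" and G0: "G 0 = 0"
    and card2: "CARD('m) \<ge> 2"
    and p_nonneg: "\<And>m mh. 0 \<le> p m mh"
    and p_sum: "(\<Sum>m\<in>UNIV. \<Sum>mh\<in>UNIV. p m mh) = 1"
    and p_unif: "\<And>m. marg1 p m = 1 / real CARD('m)"
    and p_err: "(\<Sum>m\<in>UNIV. \<Sum>mh\<in>UNIV - {m}. p m mh) = \<epsilon>"
  shows "I_Gf G f p \<ge>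
    ereal (G (1 / real CARD('m) * f (real CARD('m) * (1 - \<epsilon>))
            + (real CARD('m) - 1) / real CARD('m) * f (real CARD('m) * \<epsilon> / (real CARD('m) - 1))))"
proof -
  define n where "n = real CARD('m)"
  have n2: "n \<ge> 2" using card2 by (simp add: n_def)
  hence npos: "n > 0" and nne: "n \<noteq> 0" and n1: "n - 1 > 0" by auto
  define \<beta> where "\<beta> = 1 / n * f (n * (1 - \<epsilon>)) + (n - 1) / n * f (n * \<epsilon> / (n - 1))"
  have f11: "fdiv_term f 1 1 = 0" using f1 by (simp add: fdiv_pos)
  have eps0: "0 \<le> \<epsilon>" unfolding p_err[symmetric] by (intro sum_nonneg) (simp add: p_nonneg)
  have split: "(\<Sum>mh\<in>UNIV. g mh) = g m + (\<Sum>mh\<in>UNIV - {m}. g mh)" for g :: "'m \<Rightarrow> 'x::comm_monoid_add" and m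
    by (rule sum.remove) auto
  have diag: "(\<Sum>m\<in>UNIV. p m m) = 1 - \<epsilon>"
  proof -
    have "1 = (\<Sum>m\<in>UNIV. p m m + (\<Sum>mh\<in>UNIV - {m}. p m mh))"
      unfolding p_sum[symmetric] by (intro sum.cong refl split)
    also have "\<dots> = (\<Sum>m\<in>UNIV. p m m) + \<epsilon>" by (simp add: sum.distrib p_err)
    finally show ?thesis by simp
  qed
  have eps1: "\<epsilon> \<le> 1"
  proof -
    have "0 \<le> (\<Sum>m\<in>UNIV. p m m)" by (intro sum_nonneg) (simp add: p_nonneg)
    thus ?thesis using diag by simp
  qed
  have e1: "(1 - \<epsilon>) / (1 / n) = n * (1 - \<epsilon>)" by simp
  have e2: "\<epsilon> / ((n - 1) / n) = n * \<epsilon> / (n - 1)" by simp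
  have \<beta>eq: "ereal \<beta> = fdiv_term f (1 - \<epsilon>) (1 / n) + fdiv_term f \<epsilon> ((n - 1) / n)"
  proof -
    have "fdiv_term f (1 - \<epsilon>) (1 / n) = ereal (1 / n * f (n * (1 - \<epsilon>)))"
      using fdiv_pos[of "1/n" f "1 - \<epsilon>"] npos unfolding e1 by simp
    moreover have "fdiv_term f \<epsilon> ((n - 1) / n) = ereal ((n - 1) / n * f (n * \<epsilon> / (n - 1)))"
      using fdiv_pos[of "(n - 1)/n" f \<epsilon>] npos n1 unfolding e2 by simp
    ultimately show ?thesis unfolding \<beta>_def by simp
  qed
  have nsum: "1 / n + (n - 1) / n = 1" using nne by (simp add: add_divide_distrib[symmetric])
  have \<beta>0: "0 \<le> \<beta>"
  proof -
    have "fdiv_term f ((1 - \<epsilon>) + \<epsilon>) (1 / n + (n - 1) / n) \<le> fdiv_term f (1 - \<epsilon>) (1 / n) + fdiv_term f \<epsilon> ((n - 1) / n)"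
      by (rule merge2[OF f_convex]) (use eps0 eps1 npos n1 in auto)
    hence "0 \<le> ereal \<beta>" using f11 nsum \<beta>eq by simp
    thus ?thesis by simp
  qed
  have main: "ereal (G \<beta>) \<le> I_Gf G f p"
    unfolding I_Gf_def
  proof (rule INF_greatest)
    fix q :: "'m \<Rightarrow> real" assume "q \<in> prob_dists"
    hence q0: "\<And>y. 0 \<le> q y" and q1: "(\<Sum>y\<in>UNIV. q y) = 1" by (auto simp: prob_dists_def)
    define D where "D m = f_div f (cond_dist p m) q" for m
    have cond: "cond_dist p m y = n * p m y" for m y
      by (simp add: cond_dist_def p_unif n_def)
    have Dm: "D m = (\<Sum>y\<in>UNIV. fdiv_term f (n * p m y) (q y))" for m
      by (simp add: D_def f_div_def cond)
    have D0: "0 \<le> D m" for m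
    proof -
      have "fdiv_term f (\<Sum>y\<in>UNIV. n * p m y) (\<Sum>y\<in>UNIV. q y) \<le> D m"
        unfolding Dm by (rule merge[OF f_convex]) (use npos p_nonneg q0 in auto)
      moreover have "(\<Sum>y\<in>UNIV. n * p m y) = 1"
        using p_unif[of m] nne by (simp add: sum_distrib_left[symmetric] marg1_def n_def)
      ultimately show ?thesis using q1 f11 by simp
    qed
    define g where "g m y = fdiv_term f (p m y) (q y / n)" for m y
    have Dsum: "ereal \<beta> \<le> (\<Sum>m\<in>UNIV. ereal (1 / n) * D m)"
    proof -
      have "(\<Sum>m\<in>UNIV. ereal (1 / n) * D m) = (\<Sum>m\<in>UNIV. \<Sum>y\<in>UNIV. g m y)"
      proof (intro sum.cong refl)
        fix m
        have "ereal (1 / n) * D m = (\<Sum>y\<in>UNIV. ereal (1 / n) * fdiv_term f (n * p m y) (q y))"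
          unfolding Dm using npos by (simp add: ereal_cmult_sum)
        also have "\<dots> = (\<Sum>y\<in>UNIV. g m y)"
        proof (intro sum.cong refl)
          fix y
          have "ereal (1 / n) * fdiv_term f (n * p m y) (q y) = fdiv_term f (1 / n * (n * p m y)) (1 / n * q y)"
            using npos p_nonneg q0 by (intro fdiv_scale[symmetric]) auto
          thus "ereal (1 / n) * fdiv_term f (n * p m y) (q y) = g m y" using nne by (simp add: g_def)
        qed
        finally show "ereal (1 / n) * D m = (\<Sum>y\<in>UNIV. g m y)" .
      qed
      also have "\<dots> = (\<Sum>m\<in>UNIV. g m m + (\<Sum>y\<in>UNIV - {m}. g m y))"
        by (intro sum.cong refl split)
      also have "\<dots> = (\<Sum>m\<in>UNIV. g m m) + (\<Sum>m\<in>UNIV. \<Sum>y\<in>UNIV - {m}. g m y)"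
        by (simp add: sum.distrib)
      finally have S1: "(\<Sum>m\<in>UNIV. ereal (1 / n) * D m) = (\<Sum>m\<in>UNIV. g m m) + (\<Sum>m\<in>UNIV. \<Sum>y\<in>UNIV - {m}. g m y)" .
      have A1: "fdiv_term f (\<Sum>m\<in>UNIV. p m m) (\<Sum>m\<in>UNIV. q m / n) \<le> (\<Sum>m\<in>UNIV. g m m)"
        unfolding g_def by (rule merge[OF f_convex]) (use npos p_nonneg q0 in auto)
      have qn: "(\<Sum>m\<in>UNIV. q m / n) = 1 / n" using q1 by (simp add: sum_divide_distrib[symmetric])
      have A2: "(\<Sum>m\<in>UNIV. fdiv_term f (\<Sum>y\<in>UNIV - {m}. p m y) (\<Sum>y\<in>UNIV - {m}. q y / n))
          \<le> (\<Sum>m\<in>UNIV. \<Sum>y\<in>UNIV - {m}. g m y)"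
        unfolding g_def by (intro sum_mono merge[OF f_convex]) (use npos p_nonneg q0 in auto)
      have A3: "fdiv_term f (\<Sum>m\<in>UNIV. \<Sum>y\<in>UNIV - {m}. p m y) (\<Sum>m\<in>UNIV. \<Sum>y\<in>UNIV - {m}. q y / n)
          \<le> (\<Sum>m\<in>UNIV. fdiv_term f (\<Sum>y\<in>UNIV - {m}. p m y) (\<Sum>y\<in>UNIV - {m}. q y / n))"
        by (rule merge[OF f_convex]) (use npos p_nonneg q0 in \<open>auto intro: sum_nonneg\<close>)
      have qoff: "(\<Sum>m\<in>UNIV. \<Sum>y\<in>UNIV - {m}. q y / n) = (n - 1) / n"
      proof -
        have "(\<Sum>y\<in>UNIV - {m}. q y) = 1 - q m" for m using split[of q m] q1 by simp
        hence "(\<Sum>m\<in>UNIV. \<Sum>y\<in>UNIV - {m}. q y / n) = (\<Sum>m\<in>UNIV. (1 - q m) / n)"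
          by (simp add: sum_divide_distrib[symmetric])
        also have "\<dots> = (\<Sum>m\<in>UNIV. (1 - q m)) / n" by (simp add: sum_divide_distrib)
        also have "(\<Sum>m\<in>UNIV. (1 - q m)) = n - 1" using q1 by (simp add: sum_subtractf n_def)
        finally show ?thesis .
      qed
      have "ereal \<beta> \<le> fdiv_term f (\<Sum>m\<in>UNIV. p m m) (\<Sum>m\<in>UNIV. q m / n)
          + fdiv_term f (\<Sum>m\<in>UNIV. \<Sum>y\<in>UNIV - {m}. p m y) (\<Sum>m\<in>UNIV. \<Sum>y\<in>UNIV - {m}. q y / n)"
        using \<beta>eq diag qn qoff p_err by simp
      also have "\<dots> \<le> (\<Sum>m\<in>UNIV. g m m) + (\<Sum>m\<in>UNIV. \<Sum>y\<in>UNIV - {m}. g m y)"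
        using A1 A2 A3 by (intro add_mono) auto
      finally show ?thesis using S1 by simp
    qed
    have T: "(\<Sum>m\<in>UNIV. ereal (marg1 p m) * G_ext G (f_div f (cond_dist p m) q))
          = (\<Sum>m\<in>UNIV. ereal (1 / n) * G_ext G (D m))"
      by (simp add: D_def p_unif n_def)
    have Gn: "0 \<le> G_ext G (D m)" for m
    proof (cases "D m = \<infinity>")
      case True
      have "ereal (G 0) \<le> (SUP r\<in>{0..}. ereal (G r))" by (rule SUP_upper) auto
      thus ?thesis using True G0 by (simp add: G_ext_def zero_ereal_def)
    next
      case False
      then obtain r where r: "D m = ereal r" using D0[of m] by (cases "D m") auto
      hence "0 \<le> r" using D0[of m] by simp
      hence "G 0 \<le> G r" by (intro mono_onD[OF G_mono]) auto
      thus ?thesis using r G0 by (simp add: G_ext_def)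
    qed
    show "ereal (G \<beta>) \<le> (\<Sum>m\<in>UNIV. ereal (marg1 p m) * G_ext G (f_div f (cond_dist p m) q))"
      unfolding T
    proof (cases "\<exists>m. D m = \<infinity>")
      case True
      then obtain m0 where m0: "D m0 = \<infinity>" by blast
      have c1: "G \<beta> \<le> 1 / n * G (n * \<beta>)"
      proof -
        have "G ((1 - 1/n) *\<^sub>R 0 + (1/n) *\<^sub>R (n * \<beta>)) \<le> (1 - 1/n) * G 0 + (1/n) * G (n * \<beta>)"
          by (rule convex_onD[OF G_convex]) (use npos n2 \<beta>0 in auto)
        thus ?thesis using nne G0 by simp
      qed
      have c2: "ereal (G (n * \<beta>)) \<le> G_ext G (D m0)"
        unfolding m0 G_ext_def by (simp, rule SUP_upper) (use npos \<beta>0 in auto)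
      have "ereal (G \<beta>) \<le> ereal (1 / n) * ereal (G (n * \<beta>))" using c1 by simp
      also have "\<dots> \<le> ereal (1 / n) * G_ext G (D m0)"
        using c2 npos by (intro ereal_mult_left_mono) auto
      also have "\<dots> \<le> ereal (1 / n) * G_ext G (D m0) + (\<Sum>m\<in>UNIV - {m0}. ereal (1 / n) * G_ext G (D m))"
        using npos Gn by (intro add_increasing2 sum_nonneg order_refl) auto
      also have "\<dots> = (\<Sum>m\<in>UNIV. ereal (1 / n) * G_ext G (D m))" by (rule split[symmetric])
      finally show "ereal (G \<beta>) \<le> (\<Sum>m\<in>UNIV. ereal (1 / n) * G_ext G (D m))" .
    next
      case False
      define d where "d m = real_of_ereal (D m)" for m
      have Dd: "D m = ereal (d m)" for m
        using False D0[of m] unfolding d_def by (cases "D m") auto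
      have d0: "0 \<le> d m" for m using D0[of m] Dd[of m] by simp
      have "ereal \<beta> \<le> (\<Sum>m\<in>UNIV. ereal (1 / n) * ereal (d m))" using Dsum Dd by simp
      hence b1: "\<beta> \<le> (\<Sum>m\<in>UNIV. 1 / n * d m)" by simp
      have w1: "(\<Sum>m\<in>(UNIV::'m set). 1 / n) = (1::real)" using nne by (simp add: n_def)
      have J: "G (\<Sum>m\<in>UNIV. (1 / n) *\<^sub>R d m) \<le> (\<Sum>m\<in>UNIV. 1 / n * G (d m))"
        by (rule convex_on_sum[OF _ UNIV_not_empty G_convex w1]) (use npos d0 in auto)
      have "G \<beta> \<le> G (\<Sum>m\<in>UNIV. 1 / n * d m)"
        using b1 \<beta>0 by (intro mono_onD[OF G_mono]) auto
      also have "\<dots> \<le> (\<Sum>m\<in>UNIV. 1 / n * G (d m))" using J by simp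
      finally have "ereal (G \<beta>) \<le> ereal (\<Sum>m\<in>UNIV. 1 / n * G (d m))" by simp
      also have "\<dots> = (\<Sum>m\<in>UNIV. ereal (1 / n) * G_ext G (D m))"
        by (simp add: Dd G_ext_def)
      finally show "ereal (G \<beta>) \<le> (\<Sum>m\<in>UNIV. ereal (1 / n) * G_ext G (D m))" .
    qed
  qed
  thus ?thesis by (simp add: \<beta>_def n_def)
qed

end
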